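(* Let $n\ge 1$, $k\ge 1$ be integers, let $\lambda\in\mathbb{F}_{2^n}^*$, and let $f:\mathbb{F}_{2^n}\to\mathbb{F}_2$ be given by $f(x)=Tr(\lambda x^{2^k+1})$. Then $f$ is negabent if and only if $$\lambda^{2^{n-k}}a^{2^{n-k}}+\lambda a^{2^k}+a\neq 0\quad\text{for all } a\in\mathbb{F}_{2^n}^*.$$
   Context: $Tr=Tr_1^n:\mathbb{F}_{2^n}\to\mathbb{F}_2$ is the absolute trace, $Tr(x)=x+x^2+\dots+x^{2^{n-1}}$. Fix a self-dual basis $\{\alpha_1,\dots,\alpha_n\}$ of $\mathbb{F}_{2^n}$ over $\mathbb{F}_2$ (i.e. $Tr(\alpha_i\alpha_j)=\delta_{ij}$) and identify $x=\sum x_i\alpha_i$ with $(x_1,\dots,x_n)\in\mathbb{F}_2^n$, so that $Tr(xy)=\sum_i x_iy_i$; let $wt(x)$ be the number of nonzero coordinates $x_i$. For $f:\mathbb{F}_{2^n}\to\mathbb{F}_2$ the nega-Hadamard transform is $\mathcal{N}_f(\mu)=2^{-n/2}\sum_{x\in\mathbb{F}_{2^n}}(-1)^{f(x)+Tr(\mu x)}\,\mathrm{i}^{wt(x)}$ with $\mathrm{i}=\sqrt{-1}$, and $f$ is called negabent if $|\mathcal{N}_f(\mu)|=1$ for all $\mu\in\mathbb{F}_{2^n}$. *)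

theory Defs
  imports Complex_Main
begin

text \<open>Absolute trace of F_{2^n} over F_2, with values in the prime subfield {0,1}.\<close>
definition Tr :: "nat \<Rightarrow> 'a::field \<Rightarrow> 'a" where
  "Tr n x = (\<Sum>i<n. x ^ (2 ^ i))"

definition self_dual_basis :: "nat \<Rightarrow> (nat \<Rightarrow> 'a::field) \<Rightarrow> bool" where
  "self_dual_basis n \<alpha> \<longleftrightarrow>
     (\<forall>i<n. \<forall>j<n. Tr n (\<alpha> i * \<alpha> j) = (if i = j then 1 else 0))"

definition coords :: "nat \<Rightarrow> (nat \<Rightarrow> 'a::field) \<Rightarrow> 'a \<Rightarrow> nat \<Rightarrow> 'a" where
  "coords n \<alpha> x = (THE c. (\<forall>i<n. c i \<in> {0, 1}) \<and> (\<forall>i. n \<le> i \<longrightarrow> c i = 0)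
                          \<and> x = (\<Sum>i<n. c i * \<alpha> i))"

definition wt :: "nat \<Rightarrow> (nat \<Rightarrow> 'a::field) \<Rightarrow> 'a \<Rightarrow> nat" where
  "wt n \<alpha> x = card {i. i < n \<and> coords n \<alpha> x i \<noteq> 0}"

definition sgn2 :: "'a::field \<Rightarrow> complex" where
  "sgn2 b = (if b = 0 then 1 else -1)"

text \<open>Nega-Hadamard transform of f : F_{2^n} -> F_2 (F_2 = {0,1} inside the field).\<close>
definition nega_hadamard :: "nat \<Rightarrow> (nat \<Rightarrow> 'a::{field,finite}) \<Rightarrow> ('a \<Rightarrow> 'a) \<Rightarrow> 'a \<Rightarrow> complex" where
  "nega_hadamard n \<alpha> f \<mu> =
     (1 / sqrt (2 ^ n)) * (\<Sum>x\<in>UNIV. sgn2 (f x + Tr n (\<mu> * x)) * \<i> ^ wt n \<alpha> x)"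

definition negabent :: "nat \<Rightarrow> (nat \<Rightarrow> 'a::{field,finite}) \<Rightarrow> ('a \<Rightarrow> 'a) \<Rightarrow> bool" where
  "negabent n \<alpha> f \<longleftrightarrow> (\<forall>\<mu>. cmod (nega_hadamard n \<alpha> f \<mu>) = 1)"

end

theory Submission
  imports Defs
begin


lemma fermat_gen:
  fixes x :: "'a::{field,finite}"
  assumes "x \<noteq> 0"
  shows "x ^ (card (UNIV::'a set) - 1) = 1"
proof -
  let ?U = "UNIV - {0::'a}"
  have fin: "finite ?U" by simp
  have bij: "bij_betw (\<lambda>y. x * y) ?U ?U"
    unfolding bij_betw_def inj_on_def using assms
    apply (auto simp: image_iff)
    subgoal for y by (rule ccontr, drule bspec[of _ _ "y / x"]) auto
    done
  have "(\<Prod>y\<in>?U. x * y) = (\<Prod>y\<in>?U. y)"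
    using prod.reindex_bij_betw[OF bij, of "\<lambda>y. y"] by simp
  moreover have "(\<Prod>y\<in>?U. x * y) = x ^ card ?U * (\<Prod>y\<in>?U. y)"
    by (simp add: prod.distrib)
  moreover have "(\<Prod>y\<in>?U. y) \<noteq> 0" by simp
  moreover have "card ?U = card (UNIV::'a set) - 1" by (simp add: card_Diff_singleton)
  ultimately show ?thesis by (metis mult_cancel_right2)
qed

lemma fermat_all:
  fixes x :: "'a::{field,finite}"
  shows "x ^ card (UNIV::'a set) = x"
proof (cases "x = 0")
  case True thus ?thesis by (simp add: card_gt_0_iff)
next
  case False
  have "card (UNIV::'a set) = Suc (card (UNIV::'a set) - 1)" using finite_UNIV_card_ge_0[where 'a='a] by simp
  then have "x ^ card (UNIV::'a set) = x * x ^ (card (UNIV::'a set) - 1)" by (metis power_Suc)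
  thus ?thesis using fermat_gen[OF False] by simp
qed

locale F2n =
  fixes n :: nat and \<alpha> :: "nat \<Rightarrow> 'a::{field,finite}"
  assumes n1: "n \<ge> 1" and cardF: "card (UNIV::'a set) = 2 ^ n" and sdb: "self_dual_basis n \<alpha>"
begin

lemma pow_q: "(x::'a) ^ (2 ^ n) = x"
  using fermat_all[of x] cardF by simp

lemma two_zero: "(1::'a) + 1 = 0"
proof -
  have o: "odd ((2::nat) ^ n - 1)" using n1 by simp
  have "(-1::'a) ^ (2 ^ n - 1) = 1" using fermat_gen[of "-1::'a"] cardF by simp
  then have "(-1::'a) = 1" using o by simp
  thus ?thesis by (metis add.commute add_eq_0_iff)
qed

lemma two_eq: "(2::'a) = 0" using two_zero by (metis one_add_one)

lemma add_self[simp]: "(x::'a) + x = 0"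
  by (metis mult_2 two_eq mult_zero_left)

lemma neg_eq: "- (x::'a) = x"
  by (metis add_self add_eq_0_iff)

lemma minus_eq: "(x::'a) - y = x + y"
  by (metis diff_conv_add_uminus neg_eq)

lemma frob2: "((x::'a) + y) ^ 2 = x ^ 2 + y ^ 2"
  by (simp add: power2_sum two_eq)

lemma frob: "((x::'a) + y) ^ (2 ^ j) = x ^ (2 ^ j) + y ^ (2 ^ j)"
proof (induction j)
  case 0 thus ?case by simp
next
  case (Suc j)
  have "((x::'a) + y) ^ (2 ^ Suc j) = (((x::'a) + y) ^ (2 ^ j)) ^ 2"
    by (simp add: power_mult[symmetric] mult.commute)
  also have "\<dots> = x ^ (2 ^ Suc j) + y ^ (2 ^ Suc j)"
    by (simp add: Suc frob2 power_mult[symmetric] mult.commute)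
  finally show ?case .
qed

lemma zero_pow2[simp]: "(0::'a) ^ (2 ^ j) = 0" by simp

lemma frob_sum: "finite A \<Longrightarrow> (\<Sum>i\<in>A. (y i::'a)) ^ (2 ^ j) = (\<Sum>i\<in>A. y i ^ (2 ^ j))"
  by (induction A rule: finite_induct) (simp_all add: frob)

lemma pow_shift: "(x::'a) ^ (2 ^ (a + n * b)) = x ^ (2 ^ a)"
proof (induction b)
  case 0 thus ?case by simp
next
  case (Suc b)
  have "(x::'a) ^ (2 ^ (a + n * Suc b)) = (x ^ (2 ^ (a + n * b))) ^ (2 ^ n)"
    by (simp add: power_mult[symmetric] power_add algebra_simps)
  thus ?case using Suc pow_q by simp
qed

lemma pow_mod: "(x::'a) ^ (2 ^ j) = x ^ (2 ^ (j mod n))"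
  using pow_shift[of x "j mod n" "j div n"] by simp

lemma Tr_zero[simp]: "Tr n (0::'a) = 0" by (simp add: Tr_def)

lemma Tr_add: "Tr n ((x::'a) + y) = Tr n x + Tr n y"
  by (simp add: Tr_def frob sum.distrib)

lemma Tr_sum: "finite A \<Longrightarrow> Tr n (\<Sum>i\<in>A. (y i::'a)) = (\<Sum>i\<in>A. Tr n (y i))"
  by (induction A rule: finite_induct) (simp_all add: Tr_add)

lemma sq_pow2: "((x::'a) ^ (2 ^ i)) ^ 2 = x ^ (2 ^ Suc i)"
  by (metis power_mult power_Suc mult.commute)

lemma pow2_sq: "((x::'a) ^ 2) ^ (2 ^ i) = x ^ (2 ^ Suc i)"
  by (metis power_mult power_Suc)

lemma Tr_sq: "Tr n ((x::'a) ^ 2) = Tr n x"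
proof -
  have e: "(\<Sum>i<Suc n. x^(2^i)) = x^(2^0) + (\<Sum>i<n. x^(2^Suc i))" by (rule sum.lessThan_Suc_shift)
  have e2: "(\<Sum>i<Suc n. x^(2^i)) = (\<Sum>i<n. x^(2^i)) + x^(2^n)" by (rule sum.lessThan_Suc)
  have "x + (\<Sum>i<n. x^(2^Suc i)) = (\<Sum>i<n. x^(2^i)) + x"
    using e e2 pow_q[of x] by simp
  then have "(\<Sum>i<n. x^(2^Suc i)) = (\<Sum>i<n. x^(2^i))" by (simp add: add.commute)
  thus ?thesis unfolding Tr_def by (simp only: pow2_sq)
qed

lemma Tr_pow2: "Tr n ((x::'a) ^ (2 ^ j)) = Tr n x"
proof (induction j)
  case 0 thus ?case by simp
next
  case (Suc j)
  have "(x::'a) ^ (2 ^ Suc j) = (x ^ (2 ^ j)) ^ 2"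
    by (simp only: sq_pow2)
  thus ?case using Suc Tr_sq by simp
qed

lemma Tr_bit: "Tr n (x::'a) = 0 \<or> Tr n x = 1"
proof -
  have "(Tr n x) ^ 2 = Tr n (x ^ 2)"
    unfolding Tr_def using frob_sum[of "{..<n}" "\<lambda>i. x ^ (2 ^ i)" 1]
    by (simp only: power_one_right sq_pow2 pow2_sq finite_lessThan)
  then have "Tr n x * Tr n x = Tr n x * 1" using Tr_sq by (simp add: power2_eq_square)
  thus ?thesis by (metis mult_left_cancel)
qed

lemma Tr_scal: "c = 0 \<or> c = 1 \<Longrightarrow> Tr n (c * (x::'a)) = c * Tr n x"
  by auto

definition bit :: "'a \<Rightarrow> bool" where "bit t \<longleftrightarrow> t = 0 \<or> t = 1"

lemma bit_Tr: "bit (Tr n x)" using Tr_bit bit_def by auto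

lemma bit_add: "bit a \<Longrightarrow> bit b \<Longrightarrow> bit (a + b)"
  unfolding bit_def by auto

lemma bit_mult: "bit a \<Longrightarrow> bit b \<Longrightarrow> bit (a * b)"
  unfolding bit_def by auto

lemma sgn2_add: "bit a \<Longrightarrow> bit b \<Longrightarrow> sgn2 (a + b) = sgn2 a * sgn2 b"
  unfolding bit_def sgn2_def by auto

lemma sgn2_Tr_add: "sgn2 (Tr n (a::'a)) * sgn2 (Tr n b) = sgn2 (Tr n (a + b))"
  unfolding Tr_add by (rule sgn2_add[symmetric]) (rule bit_Tr)+

lemma sgn2_sum: "finite A \<Longrightarrow> (\<forall>i\<in>A. bit (t i)) \<Longrightarrow>
    bit (\<Sum>i\<in>A. t i) \<and> sgn2 (\<Sum>i\<in>A. t i) = (\<Prod>i\<in>A. sgn2 (t i))"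
  by (induction A rule: finite_induct) (auto simp: bit_def sgn2_def)

definition Cset :: "(nat \<Rightarrow> 'a) set" where
  "Cset = {c. (\<forall>i<n. c i \<in> {0,1}) \<and> (\<forall>i. n \<le> i \<longrightarrow> c i = 0)}"

definition gb :: "(nat \<Rightarrow> 'a) \<Rightarrow> 'a" where "gb c = (\<Sum>i<n. c i * \<alpha> i)"

lemma Tr_alpha_gb:
  assumes "c \<in> Cset" "j < n"
  shows "Tr n (\<alpha> j * gb c) = c j"
proof -
  have "\<alpha> j * gb c = (\<Sum>i<n. c i * (\<alpha> j * \<alpha> i))"
    unfolding gb_def by (simp add: sum_distrib_left algebra_simps)
  then have "Tr n (\<alpha> j * gb c) = (\<Sum>i<n. Tr n (c i * (\<alpha> j * \<alpha> i)))"
    by (simp add: Tr_sum)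
  also have "\<dots> = (\<Sum>i<n. if j = i then c i else 0)"
  proof (rule sum.cong)
    fix i assume i: "i \<in> {..<n}"
    have "c i = 0 \<or> c i = 1" using assms(1) i unfolding Cset_def by auto
    then show "Tr n (c i * (\<alpha> j * \<alpha> i)) = (if j = i then c i else 0)"
      using sdb assms(2) i unfolding self_dual_basis_def by (auto simp: Tr_scal)
  qed simp
  also have "\<dots> = c j" using assms(2) by (simp add: sum.delta')
  finally show ?thesis .
qed

lemma gb_inj: "inj_on gb Cset"
proof (rule inj_onI)
  fix c d assume c: "c \<in> Cset" and d: "d \<in> Cset" and e: "gb c = gb d"
  show "c = d"
  proof
    fix i show "c i = d i"
    proof (cases "i < n")
      case True
      then show ?thesis using Tr_alpha_gb[OF c True] Tr_alpha_gb[OF d True] e by simp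
    next
      case False then show ?thesis using c d unfolding Cset_def by auto
    qed
  qed
qed

lemma card_Cset: "card Cset = 2 ^ n"
proof -
  let ?h = "\<lambda>S i. if i \<in> S then (1::'a) else 0"
  have eq: "Cset = ?h ` Pow {..<n}"
  proof
    show "Cset \<subseteq> ?h ` Pow {..<n}"
    proof
      fix c assume c: "c \<in> Cset"
      have "c = ?h {i. i < n \<and> c i = 1}"
      proof
        fix i show "c i = ?h {i. i < n \<and> c i = 1} i"
          using c unfolding Cset_def by (cases "i < n") auto
      qed
      then show "c \<in> ?h ` Pow {..<n}" by blast
    qed
  next
    show "?h ` Pow {..<n} \<subseteq> Cset" unfolding Cset_def by auto
  qed
  have inj: "inj_on ?h (Pow {..<n})"
  proof (rule inj_onI)
    fix S T assume "?h S = ?h T"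
    then have "\<forall>i. (i \<in> S) = (i \<in> T)" by (metis zero_neq_one)
    then show "S = T" by blast
  qed
  show ?thesis unfolding eq card_image[OF inj] by (simp add: card_Pow)
qed

lemma gb_surj: "gb ` Cset = UNIV"
proof -
  have "card (gb ` Cset) = card (UNIV :: 'a set)"
    using card_image[OF gb_inj] card_Cset cardF by simp
  then show ?thesis by (simp add: card_subset_eq)
qed

lemma expand: "x = (\<Sum>i<n. Tr n (\<alpha> i * x) * \<alpha> i)"
proof -
  obtain c where c: "c \<in> Cset" and x: "x = gb c" using gb_surj by (metis UNIV_I imageE)
  have "(\<Sum>i<n. Tr n (\<alpha> i * x) * \<alpha> i) = (\<Sum>i<n. c i * \<alpha> i)"
    by (rule sum.cong) (simp_all add: x Tr_alpha_gb[OF c])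
  then show ?thesis using x gb_def by simp
qed

lemma coords_eq: "coords n \<alpha> x = (\<lambda>i. if i < n then Tr n (\<alpha> i * x) else 0)"
  unfolding coords_def
proof (rule the_equality)
  show "(\<forall>i<n. (if i < n then Tr n (\<alpha> i * x) else 0) \<in> {0, 1}) \<and>
    (\<forall>i. n \<le> i \<longrightarrow> (if i < n then Tr n (\<alpha> i * x) else 0) = 0) \<and>
    x = (\<Sum>i<n. (if i < n then Tr n (\<alpha> i * x) else 0) * \<alpha> i)"
    using Tr_bit expand[of x] by auto
next
  fix c assume h: "(\<forall>i<n. c i \<in> {0, 1}) \<and> (\<forall>i. n \<le> i \<longrightarrow> c i = 0) \<and> x = (\<Sum>i<n. c i * \<alpha> i)"
  then have c: "c \<in> Cset" and x: "x = gb c" unfolding Cset_def gb_def by auto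
  show "c = (\<lambda>i. if i < n then Tr n (\<alpha> i * x) else 0)"
  proof
    fix i show "c i = (if i < n then Tr n (\<alpha> i * x) else 0)"
      using h Tr_alpha_gb[OF c, of i] x by auto
  qed
qed

lemma wt_eq: "wt n \<alpha> x = card {i. i < n \<and> Tr n (\<alpha> i * x) = 1}"
proof -
  have "{i. i < n \<and> coords n \<alpha> x i \<noteq> 0} = {i. i < n \<and> Tr n (\<alpha> i * x) = 1}"
    unfolding coords_eq using Tr_bit by auto
  then show ?thesis unfolding wt_def by simp
qed

lemma Tr_prod: "Tr n (x * z) = (\<Sum>j<n. Tr n (\<alpha> j * x) * Tr n (\<alpha> j * z))"
proof -
  have "x * z = (\<Sum>j<n. Tr n (\<alpha> j * z) * (\<alpha> j * x))"
    by (subst expand[of z]) (simp add: sum_distrib_left algebra_simps)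
  then have "Tr n (x * z) = (\<Sum>j<n. Tr n (Tr n (\<alpha> j * z) * (\<alpha> j * x)))"
    by (simp add: Tr_sum)
  also have "\<dots> = (\<Sum>j<n. Tr n (\<alpha> j * x) * Tr n (\<alpha> j * z))"
    by (rule sum.cong[OF refl]) (metis Tr_scal Tr_bit mult.commute)
  finally show ?thesis .
qed

end

context F2n begin

lemma add_self2[simp]: "(x::'a) + (x + y) = y"
  by (metis add.assoc add_self add_0)

lemma pow_card: "(w::complex) ^ card {j. j < n \<and> P j} = (\<Prod>j<n. if P j then w else 1)"
proof -
  have "{j. j < n \<and> P j} = {j \<in> {..<n}. P j}" by auto
  then show ?thesis using prod.inter_filter[of "{..<n}" "\<lambda>_. w" P] by simp
qed

lemma sgn2_cnj: "cnj (sgn2 t) = sgn2 t" unfolding sgn2_def by simp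

lemma pointwise:
  assumes "bit (a::'a)" "bit b"
  shows "(if a = 1 then \<i> else 1) * cnj (if a + b = 1 then \<i> else 1)
       = (if b = 1 then -\<i> else 1) * sgn2 (a * b)"
  using assms unfolding bit_def by (elim disjE) (simp_all add: sgn2_def two_eq)

lemma weight:
  "\<i> ^ wt n \<alpha> x * cnj (\<i> ^ wt n \<alpha> (x + z)) = (-\<i>) ^ wt n \<alpha> z * sgn2 (Tr n (x * z))"
proof -
  let ?a = "\<lambda>j. Tr n (\<alpha> j * x)" and ?b = "\<lambda>j. Tr n (\<alpha> j * z)"
  have ab: "Tr n (\<alpha> j * (x + z)) = ?a j + ?b j" for j
    by (simp add: distrib_left Tr_add)
  have L: "\<i> ^ wt n \<alpha> x * cnj (\<i> ^ wt n \<alpha> (x + z))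
     = (\<Prod>j<n. (if ?a j = 1 then \<i> else 1) * cnj (if ?a j + ?b j = 1 then \<i> else 1))"
    unfolding wt_eq pow_card ab cnj_prod by (rule prod.distrib[symmetric])
  have bb: "\<forall>j\<in>{..<n}. bit (?a j * ?b j)" by (simp add: bit_mult bit_Tr)
  have s: "sgn2 (Tr n (x * z)) = (\<Prod>j<n. sgn2 (?a j * ?b j))"
    unfolding Tr_prod[of x z] using sgn2_sum[OF finite_lessThan bb] by (rule conjunct2)
  have R: "(-\<i>) ^ wt n \<alpha> z * sgn2 (Tr n (x * z))
     = (\<Prod>j<n. (if ?b j = 1 then -\<i> else 1) * sgn2 (?a j * ?b j))"
    unfolding wt_eq pow_card s by (rule prod.distrib[symmetric])
  show ?thesis unfolding L R
    by (rule prod.cong[OF refl]) (rule pointwise[OF bit_Tr bit_Tr])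
qed

lemma charsum: "(\<Sum>x\<in>UNIV. sgn2 (Tr n (x * (w::'a)))) = (if w = 0 then 2 ^ n else 0)"
proof (cases "w = 0")
  case True
  then show ?thesis using cardF by (simp add: sgn2_def)
next
  case False
  define c where "c = \<alpha> 0 * \<alpha> 0 / w"
  have c1: "Tr n (c * w) = 1" using sdb n1 False unfolding c_def self_dual_basis_def by auto
  let ?S = "\<Sum>x\<in>UNIV. sgn2 (Tr n (x * w))"
  have "?S = (\<Sum>x\<in>UNIV. sgn2 (Tr n ((x + c) * w)))"
    by (rule sum.reindex_bij_witness[of _ "\<lambda>x. x + c" "\<lambda>x. x + c"]) (simp_all add: add.assoc)
  also have "\<dots> = (\<Sum>x\<in>UNIV. - sgn2 (Tr n (x * w)))"
  proof (rule sum.cong[OF refl])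
    fix x
    have "Tr n ((x + c) * w) = Tr n (x * w) + 1" by (simp add: distrib_right Tr_add c1)
    then show "sgn2 (Tr n ((x + c) * w)) = - sgn2 (Tr n (x * w))"
      using Tr_bit[of "x * w"] two_eq unfolding sgn2_def by auto
  qed
  also have "\<dots> = - ?S" by (simp add: sum_negf)
  finally have "?S = 0" by simp
  then show ?thesis using False by simp
qed

end

context F2n begin

lemma km_pow:
  shows "((x::'a) ^ (2 ^ k)) ^ (2 ^ (n - k mod n)) = x"
proof -
  have lt: "k mod n < n" using n1 by simp
  have "k + (n - k mod n) = 0 + n * (k div n + 1)"
  proof -
    have d: "n * (k div n) + k mod n = k" by (metis div_mult_mod_eq mult.commute)
    have "n * (k div n + 1) = n * (k div n) + n" by simp
    then show ?thesis using lt d by linarith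
  qed
  then have "((x::'a) ^ (2 ^ k)) ^ (2 ^ (n - k mod n)) = x ^ (2 ^ (0 + n * (k div n + 1)))"
    by (metis power_mult power_add)
  also have "\<dots> = x" by (simp only: pow_shift) simp
  finally show ?thesis .
qed

lemma quad:
  fixes lam x z :: 'a
  shows "Tr n (lam * (x + z) ^ (2 ^ k + 1)) = Tr n (lam * x ^ (2 ^ k + 1)) + Tr n (lam * z ^ (2 ^ k + 1))
     + Tr n (x * (lam ^ (2 ^ (n - k mod n)) * z ^ (2 ^ (n - k mod n)) + lam * z ^ (2 ^ k)))"
proof -
  let ?m = "n - k mod n"
  have e: "lam * (x + z) ^ (2 ^ k + 1) = lam * x ^ (2 ^ k + 1) + lam * z ^ (2 ^ k + 1)
      + lam * x ^ (2 ^ k) * z + x * (lam * z ^ (2 ^ k))"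
  proof -
    have "(x + z) ^ (2 ^ k + 1) = (x ^ (2 ^ k) + z ^ (2 ^ k)) * (x + z)"
      by (simp only: power_add power_one_right frob)
    then show ?thesis by (simp add: power_add algebra_simps)
  qed
  have t: "Tr n (lam * x ^ (2 ^ k) * z) = Tr n (x * (lam ^ (2 ^ ?m) * z ^ (2 ^ ?m)))"
  proof -
    have "Tr n (lam * x ^ (2 ^ k) * z) = Tr n ((lam * x ^ (2 ^ k) * z) ^ (2 ^ ?m))"
      by (rule Tr_pow2[symmetric])
    also have "(lam * x ^ (2 ^ k) * z) ^ (2 ^ ?m) = lam ^ (2 ^ ?m) * (x ^ (2 ^ k)) ^ (2 ^ ?m) * z ^ (2 ^ ?m)"
      by (simp only: power_mult_distrib)
    also have "\<dots> = x * (lam ^ (2 ^ ?m) * z ^ (2 ^ ?m))" by (simp add: km_pow)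
    finally show ?thesis .
  qed
  show ?thesis unfolding e by (simp add: Tr_add t distrib_left add.assoc)
qed

definition Fv :: "'a \<Rightarrow> nat \<Rightarrow> 'a \<Rightarrow> 'a \<Rightarrow> 'a" where
  "Fv lam k \<mu> x = Tr n (lam * x ^ (2 ^ k + 1)) + Tr n (\<mu> * x)"

definition Pp :: "'a \<Rightarrow> nat \<Rightarrow> 'a \<Rightarrow> 'a" where
  "Pp lam k z = lam ^ (2 ^ (n - k mod n)) * z ^ (2 ^ (n - k mod n)) + lam * z ^ (2 ^ k) + z"

lemma bit_Fv: "bit (Fv lam k \<mu> x)" unfolding Fv_def by (intro bit_add bit_Tr)

lemma Fv_shift:
  "Fv lam k \<mu> x + Fv lam k \<mu> (x + z) = Fv lam k \<mu> z
     + Tr n (x * (lam ^ (2 ^ (n - k mod n)) * z ^ (2 ^ (n - k mod n)) + lam * z ^ (2 ^ k)))"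
  unfolding Fv_def quad distrib_left Tr_add by (simp add: add_ac)

lemma pointwise_main:
  fixes x z :: 'a
  shows "(sgn2 (Fv lam k \<mu> x) * \<i> ^ wt n \<alpha> x) * cnj (sgn2 (Fv lam k \<mu> (x + z)) * \<i> ^ wt n \<alpha> (x + z))
    = (sgn2 (Fv lam k \<mu> z) * (-\<i>) ^ wt n \<alpha> z) * sgn2 (Tr n (x * Pp lam k z))"
proof -
  let ?Q = "lam ^ (2 ^ (n - k mod n)) * z ^ (2 ^ (n - k mod n)) + lam * z ^ (2 ^ k)"
  have "(sgn2 (Fv lam k \<mu> x) * \<i> ^ wt n \<alpha> x) * cnj (sgn2 (Fv lam k \<mu> (x + z)) * \<i> ^ wt n \<alpha> (x + z))
     = (sgn2 (Fv lam k \<mu> x) * sgn2 (Fv lam k \<mu> (x + z))) * (\<i> ^ wt n \<alpha> x * cnj (\<i> ^ wt n \<alpha> (x + z)))"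
    by (simp only: complex_cnj_mult sgn2_cnj mult_ac)
  also have "sgn2 (Fv lam k \<mu> x) * sgn2 (Fv lam k \<mu> (x + z)) = sgn2 (Fv lam k \<mu> z) * sgn2 (Tr n (x * ?Q))"
    using sgn2_add[OF bit_Fv bit_Fv, of lam k \<mu> x lam k \<mu> "x + z"]
      sgn2_add[OF bit_Fv bit_Tr, of lam k \<mu> z "x * ?Q"] Fv_shift[of lam k \<mu> x z] by simp
  also have "\<i> ^ wt n \<alpha> x * cnj (\<i> ^ wt n \<alpha> (x + z)) = (-\<i>) ^ wt n \<alpha> z * sgn2 (Tr n (x * z))"
    by (rule weight)
  also have "sgn2 (Fv lam k \<mu> z) * sgn2 (Tr n (x * ?Q)) * ((-\<i>) ^ wt n \<alpha> z * sgn2 (Tr n (x * z)))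
     = (sgn2 (Fv lam k \<mu> z) * (-\<i>) ^ wt n \<alpha> z) * (sgn2 (Tr n (x * ?Q)) * sgn2 (Tr n (x * z)))"
    by (simp only: mult_ac)
  also have "sgn2 (Tr n (x * ?Q)) * sgn2 (Tr n (x * z)) = sgn2 (Tr n (x * Pp lam k z))"
    unfolding sgn2_Tr_add Pp_def by (simp only: distrib_left)
  finally show ?thesis .
qed

lemma main_identity:
  fixes lam \<mu> :: 'a and k :: nat
  defines "S \<equiv> (\<Sum>x\<in>UNIV. sgn2 (Fv lam k \<mu> x) * \<i> ^ wt n \<alpha> x)"
  shows "S * cnj S = 2 ^ n * (\<Sum>z\<in>{z. Pp lam k z = 0}. sgn2 (Fv lam k \<mu> z) * (-\<i>) ^ wt n \<alpha> z)"
proof -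
  let ?A = "\<lambda>x. sgn2 (Fv lam k \<mu> x) * \<i> ^ wt n \<alpha> x"
  let ?G = "\<lambda>z. sgn2 (Fv lam k \<mu> z) * (-\<i>) ^ wt n \<alpha> z"
  have "S * cnj S = (\<Sum>x\<in>UNIV. \<Sum>y\<in>UNIV. ?A x * cnj (?A y))"
    unfolding S_def cnj_sum sum_product ..
  also have "\<dots> = (\<Sum>x\<in>UNIV. \<Sum>z\<in>UNIV. ?A x * cnj (?A (x + z)))"
  proof (rule sum.cong[OF refl])
    fix x :: 'a
    show "(\<Sum>y\<in>UNIV. ?A x * cnj (?A y)) = (\<Sum>z\<in>UNIV. ?A x * cnj (?A (x + z)))"
      by (rule sum.reindex_bij_witness[of _ "\<lambda>z. x + z" "\<lambda>y. x + y"]) simp_all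
  qed
  also have "\<dots> = (\<Sum>z\<in>UNIV. \<Sum>x\<in>UNIV. ?A x * cnj (?A (x + z)))"
    by (rule sum.swap)
  also have "\<dots> = (\<Sum>z\<in>UNIV. ?G z * (if Pp lam k z = 0 then 2 ^ n else 0))"
  proof (rule sum.cong[OF refl])
    fix z :: 'a
    have "(\<Sum>x\<in>UNIV. ?A x * cnj (?A (x + z))) = (\<Sum>x\<in>UNIV. ?G z * sgn2 (Tr n (x * Pp lam k z)))"
      by (rule sum.cong[OF refl]) (rule pointwise_main)
    also have "\<dots> = ?G z * (if Pp lam k z = 0 then 2 ^ n else 0)"
      by (simp only: sum_distrib_left[symmetric] charsum)
    finally show "(\<Sum>x\<in>UNIV. ?A x * cnj (?A (x + z))) = ?G z * (if Pp lam k z = 0 then 2 ^ n else 0)" .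
  qed
  also have "\<dots> = (\<Sum>z\<in>UNIV. if Pp lam k z = 0 then 2 ^ n * ?G z else 0)"
    by (rule sum.cong[OF refl]) simp
  also have "\<dots> = (\<Sum>z\<in>{z \<in> UNIV. Pp lam k z = 0}. 2 ^ n * ?G z)"
    by (rule sum.inter_filter[symmetric]) simp
  also have "\<dots> = 2 ^ n * (\<Sum>z\<in>{z. Pp lam k z = 0}. ?G z)"
    by (simp add: sum_distrib_left)
  finally show ?thesis .
qed

end

theorem proposition2:
  fixes lam :: "'a::{field,finite}" and n k :: nat and \<alpha> :: "nat \<Rightarrow> 'a"
  assumes "n \<ge> 1" and "k \<ge> 1" and "card (UNIV :: 'a set) = 2 ^ n"
    and "self_dual_basis n \<alpha>"
    and "lam \<noteq> 0"
  shows "negabent n \<alpha> (\<lambda>x. Tr n (lam * x ^ (2 ^ k + 1))) \<longleftrightarrow>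
         (\<forall>a. a \<noteq> 0 \<longrightarrow>
            lam ^ (2 ^ (n - k mod n)) * a ^ (2 ^ (n - k mod n)) + lam * a ^ (2 ^ k) + a \<noteq> 0)"
proof -
  interpret F: F2n n \<alpha> using assms by unfold_locales simp_all
  let ?f = "\<lambda>x. Tr n (lam * x ^ (2 ^ k + 1))"
  define K where "K = {z. F.Pp lam k z = 0}"
  define T where "T = (\<lambda>\<mu>. \<Sum>z\<in>K. sgn2 (F.Fv lam k \<mu> z) * (-\<i>) ^ wt n \<alpha> z)"
  have NT: "nega_hadamard n \<alpha> ?f \<mu> * cnj (nega_hadamard n \<alpha> ?f \<mu>) = T \<mu>" for \<mu>
  proof -
    define S where "S = (\<Sum>x\<in>UNIV. sgn2 (F.Fv lam k \<mu> x) * \<i> ^ wt n \<alpha> x)"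
    have eqN: "nega_hadamard n \<alpha> ?f \<mu> = complex_of_real (1 / sqrt (2 ^ n)) * S"
      unfolding nega_hadamard_def S_def F.Fv_def ..
    have c2: "complex_of_real (1 / sqrt (2 ^ n)) * cnj (complex_of_real (1 / sqrt (2 ^ n))) = 1 / 2 ^ n"
    proof -
      have r: "(1 / sqrt (2 ^ n :: real)) * (1 / sqrt (2 ^ n)) = 1 / 2 ^ n"
        by (simp add: real_sqrt_power[symmetric] del: real_sqrt_power)
      have "complex_of_real (1 / sqrt (2 ^ n)) * cnj (complex_of_real (1 / sqrt (2 ^ n)))
          = complex_of_real ((1 / sqrt (2 ^ n :: real)) * (1 / sqrt (2 ^ n)))"
        by (simp only: complex_cnj_complex_of_real of_real_mult)
      also have "\<dots> = complex_of_real (1 / 2 ^ n)" by (simp only: r)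
      also have "\<dots> = 1 / 2 ^ n" by simp
      finally show ?thesis .
    qed
    have "nega_hadamard n \<alpha> ?f \<mu> * cnj (nega_hadamard n \<alpha> ?f \<mu>)
       = (complex_of_real (1 / sqrt (2 ^ n)) * cnj (complex_of_real (1 / sqrt (2 ^ n)))) * (S * cnj S)"
      unfolding eqN complex_cnj_mult by (simp only: mult_ac)
    also have "\<dots> = (1 / 2 ^ n) * (2 ^ n * T \<mu>)"
      unfolding c2 S_def F.main_identity T_def K_def ..
    also have "\<dots> = T \<mu>" by simp
    finally show ?thesis .
  qed
  have cm: "cmod (nega_hadamard n \<alpha> ?f \<mu>) = 1 \<longleftrightarrow> T \<mu> = 1" for \<mu>
  proof -
    let ?N = "nega_hadamard n \<alpha> ?f \<mu>"
    have h1: "complex_of_real ((cmod ?N)\<^sup>2) = T \<mu>"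
      using NT[of \<mu>] complex_norm_square[of ?N] by simp
    have h2: "cmod ?N = 1 \<longleftrightarrow> (cmod ?N)\<^sup>2 = 1\<^sup>2"
      using power2_eq_iff_nonneg[OF norm_ge_zero zero_le_one, of ?N] by simp
    show ?thesis using h1 h2 by (metis of_real_eq_1_iff power_one)
  qed
  have P0: "F.Pp lam k 0 = 0" unfolding F.Pp_def by simp
  have wt0: "wt n \<alpha> 0 = 0" unfolding F.wt_eq by simp
  have Fv0: "F.Fv lam k \<mu> 0 = 0" for \<mu> unfolding F.Fv_def by simp
  show ?thesis
  proof
    assume neg: "negabent n \<alpha> ?f"
    then have T1: "T \<mu> = 1" for \<mu> using cm unfolding negabent_def by blast
    show "\<forall>a. a \<noteq> 0 \<longrightarrow> lam ^ (2 ^ (n - k mod n)) * a ^ (2 ^ (n - k mod n)) + lam * a ^ (2 ^ k) + a \<noteq> 0"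
    proof (intro allI impI notI)
      fix a :: 'a assume a0: "a \<noteq> 0"
        and Pa: "lam ^ (2 ^ (n - k mod n)) * a ^ (2 ^ (n - k mod n)) + lam * a ^ (2 ^ k) + a = 0"
      have aK: "a \<in> K" using Pa unfolding K_def F.Pp_def by simp
      let ?H = "\<lambda>z. sgn2 (Tr n (lam * z ^ (2 ^ k + 1))) * (-\<i>) ^ wt n \<alpha> z"
      have "(\<Sum>\<mu>\<in>UNIV. T \<mu> * sgn2 (Tr n (\<mu> * a))) = (\<Sum>\<mu>\<in>UNIV. sgn2 (Tr n (\<mu> * a)))"
        by (simp add: T1)
      also have "\<dots> = 0" using F.charsum[of a] a0 by simp
      finally have lhs0: "(\<Sum>\<mu>\<in>UNIV. T \<mu> * sgn2 (Tr n (\<mu> * a))) = 0" .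
      have "(\<Sum>\<mu>\<in>UNIV. T \<mu> * sgn2 (Tr n (\<mu> * a)))
          = (\<Sum>\<mu>\<in>UNIV. \<Sum>z\<in>K. ?H z * sgn2 (Tr n (\<mu> * (z + a))))"
      proof (rule sum.cong[OF refl])
        fix \<mu> :: 'a
        show "T \<mu> * sgn2 (Tr n (\<mu> * a)) = (\<Sum>z\<in>K. ?H z * sgn2 (Tr n (\<mu> * (z + a))))"
          unfolding T_def sum_distrib_right
        proof (rule sum.cong[OF refl])
          fix z :: 'a
          have "sgn2 (F.Fv lam k \<mu> z) = sgn2 (Tr n (lam * z ^ (2 ^ k + 1))) * sgn2 (Tr n (\<mu> * z))"
            unfolding F.Fv_def by (rule F.sgn2_add[OF F.bit_Tr F.bit_Tr])
          moreover have "sgn2 (Tr n (\<mu> * z)) * sgn2 (Tr n (\<mu> * a)) = sgn2 (Tr n (\<mu> * (z + a)))"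
            unfolding F.sgn2_Tr_add distrib_left ..
          ultimately show "sgn2 (F.Fv lam k \<mu> z) * (-\<i>) ^ wt n \<alpha> z * sgn2 (Tr n (\<mu> * a))
              = ?H z * sgn2 (Tr n (\<mu> * (z + a)))" by (simp add: mult_ac)
        qed
      qed
      also have "\<dots> = (\<Sum>z\<in>K. \<Sum>\<mu>\<in>UNIV. ?H z * sgn2 (Tr n (\<mu> * (z + a))))"
        by (rule sum.swap)
      also have "\<dots> = (\<Sum>z\<in>K. if z = a then ?H z * 2 ^ n else 0)"
      proof (rule sum.cong[OF refl])
        fix z :: 'a
        have za: "z + a = 0 \<longleftrightarrow> z = a"
        proof
          assume "z + a = 0" then have "z = - a" by (simp add: eq_neg_iff_add_eq_0)
          then show "z = a" using F.neg_eq[of a] by simp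
        next
          assume "z = a" then show "z + a = 0" by simp
        qed
        show "(\<Sum>\<mu>\<in>UNIV. ?H z * sgn2 (Tr n (\<mu> * (z + a)))) = (if z = a then ?H z * 2 ^ n else 0)"
        proof -
          have "(\<Sum>\<mu>\<in>UNIV. ?H z * sgn2 (Tr n (\<mu> * (z + a)))) = ?H z * (\<Sum>\<mu>\<in>UNIV. sgn2 (Tr n (\<mu> * (z + a))))"
            by (rule sum_distrib_left[symmetric])
          also have "\<dots> = ?H z * (if z + a = 0 then 2 ^ n else 0)" by (simp only: F.charsum)
          also have "\<dots> = (if z = a then ?H z * 2 ^ n else 0)"
            unfolding za by (cases "z = a") (simp_all only: if_True if_False mult_zero_right simp_thms)
          finally show ?thesis .
        qed
      qed
      also have "\<dots> = ?H a * 2 ^ n" using aK by (simp add: sum.delta')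
      finally have "?H a * 2 ^ n = 0" using lhs0 by simp
      moreover have "?H a \<noteq> 0" unfolding sgn2_def by simp
      ultimately show False by simp
    qed
  next
    assume cond: "\<forall>a. a \<noteq> 0 \<longrightarrow> lam ^ (2 ^ (n - k mod n)) * a ^ (2 ^ (n - k mod n)) + lam * a ^ (2 ^ k) + a \<noteq> 0"
    have K0: "K = {0}"
    proof (rule set_eqI)
      fix z :: 'a
      show "z \<in> K \<longleftrightarrow> z \<in> {0}"
      proof
        assume "z \<in> K"
        then have Pz: "F.Pp lam k z = 0" by (simp add: K_def)
        have "z = 0"
        proof (rule ccontr)
          assume "z \<noteq> 0"
          then have "lam ^ (2 ^ (n - k mod n)) * z ^ (2 ^ (n - k mod n)) + lam * z ^ (2 ^ k) + z \<noteq> 0"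
            using cond by blast
          then show False using Pz unfolding F.Pp_def by blast
        qed
        then show "z \<in> {0}" by blast
      next
        assume "z \<in> {0}" then show "z \<in> K" using P0 by (simp add: K_def)
      qed
    qed
    have "T \<mu> = 1" for \<mu> unfolding T_def K0 by (simp add: wt0 Fv0 sgn2_def)
    then show "negabent n \<alpha> ?f" unfolding negabent_def using cm by blast
  qed
qed

end
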